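(* Let $K$ and $L$ be $n$-element finite sets, $M=K\times L$, and let $u=(u_{kl})$ be a unitary matrix indexed by $K\times L$ all of whose entries are nonzero. Let $G$ be a symmetry group of $u$ and $R$ the associated representation of $G$ on $F(M)$ (as defined in the context). Then the Berezin transform $I_u$ commutes with $R$: $I_uR_g=R_gI_u$ for all $g\in G$.
   Context: For a finite set $J$, $F(J)$ denotes the space of complex-valued functions on $J$, with standard Hermitian product. For $f=(f_{kl})\in F(M)$, $C_uf$ and $D_uf$ are the operators on $F(K)$ with matrices $x_{kk'}=\sum_{l\in L}u_{kl}f_{kl}\bar u_{k'l}$ and $y_{kk'}=\sum_{l\in L}u_{kl}f_{k'l}\bar u_{k'l}$ respectively; these maps are linear bijections $F(M)\to\operatorname{End}F(K)$, and the Berezin transform is $I_u=C_u^{-1}D_u$, explicitly $(I_uf)_{kl}=\sum_{k',l'}\frac{u_{kl'}u_{k'l}}{u_{kl}u_{k'l'}}f_{k'l'}|u_{k'l'}|^2$. Let $\mathcal U:F(L)\to F(K)$ be $(\mathcal U\psi)_k=\sum_{l}u_{kl}\psi_l$. A group $G$ is called a symmetry group of $u$ if $G$ acts on the left on the sets $K$ and $L$, and there are faithful unitary representations $S$ on $F(K)$ and $T$ on $F(L)$ of the form $(S_g\varphi)_k=a_k(g)\varphi_{g^{-1}k}$, $(T_g\psi)_l=b_l(g)\psi_{g^{-1}l}$, where $|a_k(g)|=|b_l(g)|=1$, such that $S_g\mathcal U=\mathcal U T_g$ for all $g\in G$. The representation $R$ of $G$ on $F(M)$ is $(R_gf)_{kl}=f_{g^{-1}k\,g^{-1}l}$.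 *)

theory Defs
  imports "HOL-Analysis.Analysis" "HOL-Algebra.Group_Action"
begin

text \<open>Functions on a finite set J are modelled as total functions whose values
outside J are irrelevant. Elements of F(M), M = K x L, are curried functions f k l.\<close>

definition unitary_mat :: "'k set \<Rightarrow> 'l set \<Rightarrow> ('k \<Rightarrow> 'l \<Rightarrow> complex) \<Rightarrow> bool" where
  "unitary_mat K L u \<longleftrightarrow>
     (\<forall>k\<in>K. \<forall>k'\<in>K. (\<Sum>l\<in>L. u k l * cnj (u k' l)) = (if k = k' then 1 else 0)) \<and>
     (\<forall>l\<in>L. \<forall>l'\<in>L. (\<Sum>k\<in>K. cnj (u k l) * u k l') = (if l = l' then 1 else 0))"

definition Uop :: "'l set \<Rightarrow> ('k \<Rightarrow> 'l \<Rightarrow> complex) \<Rightarrow> ('l \<Rightarrow> complex) \<Rightarrow> 'k \<Rightarrow> complex" where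
  "Uop L u \<psi> k = (\<Sum>l\<in>L. u k l * \<psi> l)"

definition berezin :: "'k set \<Rightarrow> 'l set \<Rightarrow> ('k \<Rightarrow> 'l \<Rightarrow> complex) \<Rightarrow> ('k \<Rightarrow> 'l \<Rightarrow> complex) \<Rightarrow> 'k \<Rightarrow> 'l \<Rightarrow> complex" where
  "berezin K L u f k l =
     (\<Sum>k'\<in>K. \<Sum>l'\<in>L. (u k l' * u k' l) / (u k l * u k' l') * f k' l' * (of_real (cmod (u k' l')))\<^sup>2)"

definition monop :: "('g, 'b) monoid_scheme \<Rightarrow> ('g \<Rightarrow> 'x \<Rightarrow> 'x) \<Rightarrow> ('x \<Rightarrow> 'g \<Rightarrow> complex) \<Rightarrow> 'g \<Rightarrow> ('x \<Rightarrow> complex) \<Rightarrow> 'x \<Rightarrow> complex" where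
  "monop G act a g \<phi> x = a x g * \<phi> (act (inv\<^bsub>G\<^esub> g) x)"

definition monomial_rep :: "('g, 'b) monoid_scheme \<Rightarrow> 'x set \<Rightarrow> ('g \<Rightarrow> 'x \<Rightarrow> 'x) \<Rightarrow> ('x \<Rightarrow> 'g \<Rightarrow> complex) \<Rightarrow> bool" where
  "monomial_rep G X act a \<longleftrightarrow>
     (\<forall>g\<in>carrier G. \<forall>x\<in>X. cmod (a x g) = 1) \<and>
     (\<forall>g\<in>carrier G. \<forall>h\<in>carrier G. \<forall>\<phi>. \<forall>x\<in>X.
        monop G act a (g \<otimes>\<^bsub>G\<^esub> h) \<phi> x = monop G act a g (monop G act a h \<phi>) x) \<and>
     (\<forall>x\<in>X. \<forall>\<phi>. monop G act a \<one>\<^bsub>G\<^esub> \<phi> x = \<phi> x) \<and>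
     (\<forall>g\<in>carrier G. (\<forall>\<phi>. \<forall>x\<in>X. monop G act a g \<phi> x = \<phi> x) \<longrightarrow> g = \<one>\<^bsub>G\<^esub>)"

definition symmetry_group :: "('g, 'b) monoid_scheme \<Rightarrow> 'k set \<Rightarrow> 'l set \<Rightarrow> ('k \<Rightarrow> 'l \<Rightarrow> complex)
   \<Rightarrow> ('g \<Rightarrow> 'k \<Rightarrow> 'k) \<Rightarrow> ('g \<Rightarrow> 'l \<Rightarrow> 'l) \<Rightarrow> ('k \<Rightarrow> 'g \<Rightarrow> complex) \<Rightarrow> ('l \<Rightarrow> 'g \<Rightarrow> complex) \<Rightarrow> bool" where
  "symmetry_group G K L u actK actL a b \<longleftrightarrow>
     group G \<and> group_action G K actK \<and> group_action G L actL \<and>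
     monomial_rep G K actK a \<and> monomial_rep G L actL b \<and>
     (\<forall>g\<in>carrier G. \<forall>\<psi>. \<forall>k\<in>K.
        monop G actK a g (Uop L u \<psi>) k = Uop L u (monop G actL b g \<psi>) k)"

definition Rop :: "('g, 'b) monoid_scheme \<Rightarrow> ('g \<Rightarrow> 'k \<Rightarrow> 'k) \<Rightarrow> ('g \<Rightarrow> 'l \<Rightarrow> 'l) \<Rightarrow> 'g
   \<Rightarrow> ('k \<Rightarrow> 'l \<Rightarrow> complex) \<Rightarrow> 'k \<Rightarrow> 'l \<Rightarrow> complex" where
  "Rop G actK actL g f k l = f (actK (inv\<^bsub>G\<^esub> g) k) (actL (inv\<^bsub>G\<^esub> g) l)"

end

theory Submission
  imports Defs
begin

lemma ratio_inv:
  fixes A B C D a1 a2 b1 b2 :: complex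
  assumes "a1 \<noteq> 0" "a2 \<noteq> 0" "b1 \<noteq> 0" "b2 \<noteq> 0" "A \<noteq> 0" "B \<noteq> 0" "C \<noteq> 0" "D \<noteq> 0"
  shows "((a1 * A / b2) * (a2 * B / b1)) / ((a1 * C / b1) * (a2 * D / b2)) = (A * B) / (C * D)"
  using assms by (simp add: field_simps)

theorem corollary3p3:
  fixes G :: "('g, 'b) monoid_scheme"
    and K :: "'k set" and L :: "'l set" and n :: nat
    and u :: "'k \<Rightarrow> 'l \<Rightarrow> complex"
    and actK :: "'g \<Rightarrow> 'k \<Rightarrow> 'k" and actL :: "'g \<Rightarrow> 'l \<Rightarrow> 'l"
    and a :: "'k \<Rightarrow> 'g \<Rightarrow> complex" and b :: "'l \<Rightarrow> 'g \<Rightarrow> complex"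
  assumes "finite K" and "finite L" and "card K = n" and "card L = n"
    and "unitary_mat K L u"
    and "\<forall>k\<in>K. \<forall>l\<in>L. u k l \<noteq> 0"
    and "symmetry_group G K L u actK actL a b"
  shows "\<forall>g\<in>carrier G. \<forall>f. \<forall>k\<in>K. \<forall>l\<in>L.
           berezin K L u (Rop G actK actL g f) k l = Rop G actK actL g (berezin K L u f) k l"
proof (intro ballI allI)
  fix g f k l assume g: "g \<in> carrier G" and k: "k \<in> K" and l: "l \<in> L"
  have grp: "group G" and aK: "group_action G K actK" and aL: "group_action G L actL"
    and mK: "monomial_rep G K actK a" and mL: "monomial_rep G L actL b"
    and sym: "\<forall>g\<in>carrier G. \<forall>\<psi>. \<forall>k\<in>K.
        monop G actK a g (Uop L u \<psi>) k = Uop L u (monop G actL b g \<psi>) k"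
    using assms(7) unfolding symmetry_group_def by auto
  define h where "h = inv\<^bsub>G\<^esub> g"
  have h: "h \<in> carrier G" using g grp h_def by (simp add: group.inv_closed)
  have ihg: "inv\<^bsub>G\<^esub> h = g" using g grp h_def by (simp add: group.inv_inv)
  have K1: "\<And>x. x \<in> K \<Longrightarrow> actK h x \<in> K" "\<And>x. x \<in> K \<Longrightarrow> actK g x \<in> K"
    using group_action.element_image[OF aK h _ refl] group_action.element_image[OF aK g _ refl] by blast+
  have K2: "\<And>x. x \<in> K \<Longrightarrow> actK g (actK h x) = x" "\<And>x. x \<in> K \<Longrightarrow> actK h (actK g x) = x"
  proof -
    fix x assume x: "x \<in> K"
    show "actK g (actK h x) = x" using group_action.orbit_sym_aux[OF aK h x refl] unfolding ihg .
    show "actK h (actK g x) = x" using group_action.orbit_sym_aux[OF aK g x refl] unfolding h_def .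
  qed
  have L1: "\<And>x. x \<in> L \<Longrightarrow> actL h x \<in> L" "\<And>x. x \<in> L \<Longrightarrow> actL g x \<in> L"
    using group_action.element_image[OF aL h _ refl] group_action.element_image[OF aL g _ refl] by blast+
  have L2: "\<And>x. x \<in> L \<Longrightarrow> actL g (actL h x) = x" "\<And>x. x \<in> L \<Longrightarrow> actL h (actL g x) = x"
  proof -
    fix x assume x: "x \<in> L"
    show "actL g (actL h x) = x" using group_action.orbit_sym_aux[OF aL h x refl] unfolding ihg .
    show "actL h (actL g x) = x" using group_action.orbit_sym_aux[OF aL g x refl] unfolding h_def .
  qed
  have na: "\<And>x. x \<in> K \<Longrightarrow> cmod (a x g) = 1" using mK g unfolding monomial_rep_def by auto
  have nb: "\<And>x. x \<in> L \<Longrightarrow> cmod (b x g) = 1" using mL g unfolding monomial_rep_def by auto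
  have nz: "\<And>x y. x \<in> K \<Longrightarrow> y \<in> L \<Longrightarrow> u x y \<noteq> 0" using assms(6) by auto
  have rel: "u x y * b y g = a x g * u (actK h x) (actL h y)" if x: "x \<in> K" and y: "y \<in> L" for x y
  proof -
    define \<psi> where "\<psi> = (\<lambda>l'. if l' = actL h y then (1::complex) else 0)"
    have "monop G actK a g (Uop L u \<psi>) x = a x g * u (actK h x) (actL h y)"
      unfolding monop_def Uop_def \<psi>_def h_def[symmetric] using L1(1)[OF y] \<open>finite L\<close>
      by (simp add: if_distrib cong: if_cong)
    moreover have "Uop L u (monop G actL b g \<psi>) x = (\<Sum>l'\<in>L. if l' = y then u x y * b y g else 0)"
      unfolding monop_def Uop_def \<psi>_def h_def[symmetric]
    proof (rule sum.cong)
      fix l' assume l': "l' \<in> L"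
      have "actL h l' = actL h y \<longleftrightarrow> l' = y" using L2(1) l' y by metis
      thus "u x l' * (b l' g * (if actL h l' = actL h y then 1 else 0)) = (if l' = y then u x y * b y g else 0)"
        by auto
    qed simp
    ultimately show ?thesis using sym g x y \<open>finite L\<close> by simp
  qed
  have uform: "u x y = a x g * u (actK h x) (actL h y) / b y g" if "x \<in> K" "y \<in> L" for x y
  proof -
    have "b y g \<noteq> 0" using nb[OF that(2)] by auto
    thus ?thesis using rel[OF that] by (simp add: field_simps)
  qed
  have ucm: "cmod (u x y) = cmod (u (actK h x) (actL h y))" if "x \<in> K" "y \<in> L" for x y
  proof -
    have "cmod (u x y * b y g) = cmod (a x g * u (actK h x) (actL h y))" using rel[OF that] by simp
    thus ?thesis using na nb that by (simp add: norm_mult)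
  qed
  define W where "W = (\<lambda>k l k' l'. (u k l' * u k' l) / (u k l * u k' l') * (of_real (cmod (u k' l')))\<^sup>2 :: complex)"
  have Winv: "W x y x' y' = W (actK h x) (actL h y) (actK h x') (actL h y')"
    if "x \<in> K" "y \<in> L" "x' \<in> K" "y' \<in> L" for x y x' y'
  proof -
    have "(u x y' * u x' y) / (u x y * u x' y') =
       (u (actK h x) (actL h y') * u (actK h x') (actL h y)) / (u (actK h x) (actL h y) * u (actK h x') (actL h y'))"
      unfolding uform[OF that(1,2)] uform[OF that(1,4)] uform[OF that(3,2)] uform[OF that(3,4)]
    proof (rule ratio_inv)
      have az: "\<And>z. z \<in> K \<Longrightarrow> a z g \<noteq> 0" using na by (metis norm_zero zero_neq_one)
      have bz: "\<And>z. z \<in> L \<Longrightarrow> b z g \<noteq> 0" using nb by (metis norm_zero zero_neq_one)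
      show "a x g \<noteq> 0" "a x' g \<noteq> 0" "b y g \<noteq> 0" "b y' g \<noteq> 0"
        using az bz that by auto
      show "u (actK h x) (actL h y') \<noteq> 0" "u (actK h x') (actL h y) \<noteq> 0"
        "u (actK h x) (actL h y) \<noteq> 0" "u (actK h x') (actL h y') \<noteq> 0"
        using nz K1 L1 that by auto
    qed
    thus ?thesis unfolding W_def using ucm[OF that(3,4)] by simp
  qed
  have inner: "(\<Sum>l'\<in>L. W k l k' l' * f (actK h k') (actL h l')) = (\<Sum>y\<in>L. W (actK h k) (actL h l) (actK h k') y * f (actK h k') y)"
    if k': "k' \<in> K" for k'
  proof (rule sum.reindex_bij_witness[where i="actL g" and j="actL h"])
    fix l' assume l': "l' \<in> L"
    show "W (actK h k) (actL h l) (actK h k') (actL h l') * f (actK h k') (actL h l') = W k l k' l' * f (actK h k') (actL h l')"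
      using Winv[OF k l k' l'] by simp
  qed (use L1 L2 in auto)
  have "berezin K L u (Rop G actK actL g f) k l = (\<Sum>k'\<in>K. \<Sum>l'\<in>L. W k l k' l' * f (actK h k') (actL h l'))"
    unfolding berezin_def Rop_def W_def h_def by (simp add: algebra_simps)
  also have "\<dots> = (\<Sum>x\<in>K. \<Sum>y\<in>L. W (actK h k) (actL h l) x y * f x y)"
    by (rule sum.reindex_bij_witness[where i="actK g" and j="actK h"]) (use K1 K2 inner in auto)
  also have "\<dots> = Rop G actK actL g (berezin K L u f) k l"
    unfolding berezin_def Rop_def W_def h_def by (simp add: algebra_simps)
  finally show "berezin K L u (Rop G actK actL g f) k l = Rop G actK actL g (berezin K L u f) k l" .
qed

end
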